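(* Let $\alpha>1$, $V(x)=|x|^\alpha/\alpha$, and let $\mu$ be the probability measure $d\mu(x)=Z^{-1}e^{-V(x)}dx$ on $\mathbb{R}$ ($Z$ a normalizing constant). Let $\nu$ be the symmetric exponential measure $d\nu(x)=\frac12e^{-|x|}dx$ and let $t:\mathbb{R}\to\mathbb{R}$ be the monotone rearrangement map pushing $\nu$ to $\mu$ (i.e. $G=H\circ t$ with $G,H$ the distribution functions of $\nu,\mu$). Then there is a constant $C_\alpha>0$ depending only on $\alpha$ such that $$|t'\circ t^{-1}(x)|\le\frac{C_\alpha}{V'(|x|)+1},\quad x\in\mathbb{R}.$$ *)

theory Defs
  imports "HOL-Analysis.Analysis"
begin

definition V :: "real \<Rightarrow> real \<Rightarrow> real" where
  "V \<alpha> x = \<bar>x\<bar> powr \<alpha> / \<alpha>"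

definition Zc :: "real \<Rightarrow> real" where
  "Zc \<alpha> = (\<integral>y. exp (- V \<alpha> y) \<partial>lborel)"

definition H :: "real \<Rightarrow> real \<Rightarrow> real" where
  "H \<alpha> x = (LBINT y:{..x}. exp (- V \<alpha> y)) / Zc \<alpha>"

definition G :: "real \<Rightarrow> real" where
  "G x = (LBINT y:{..x}. exp (- \<bar>y\<bar>) / 2)"

end

theory Submission
  imports Defs
begin


lemma ftc_right:
  fixes \<phi> F :: "real \<Rightarrow> real"
  assumes D: "\<And>y. y \<ge> a \<Longrightarrow> (F has_real_derivative \<phi> y) (at y)"
    and C: "\<And>y. y \<ge> a \<Longrightarrow> isCont \<phi> y"
    and N: "\<And>y. y \<ge> a \<Longrightarrow> 0 \<le> \<phi> y"
    and L: "(F \<longlongrightarrow> B) at_top"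
  shows "set_integrable lborel {a<..} \<phi>" "(LBINT y:{a<..}. \<phi> y) = B - F a"
proof -
  have A: "((F \<circ> real_of_ereal) \<longlongrightarrow> F a) (at_right (ereal a))"
    unfolding ereal_tendsto_simps1
    using DERIV_isCont[OF D[of a]] by (simp add: isCont_def filterlim_at_split)
  have B: "((F \<circ> real_of_ereal) \<longlongrightarrow> B) (at_left \<infinity>)"
    unfolding ereal_tendsto_simps1 by (rule L)
  note R = interval_integral_FTC_nonneg[of "ereal a" "\<infinity>" F \<phi>, OF _ _ _ _ A B]
  have h1: "ereal a < \<infinity>" by simp
  have h2: "\<And>x. ereal a < ereal x \<Longrightarrow> ereal x < \<infinity> \<Longrightarrow> DERIV F x :> \<phi> x" using D by simp
  have h3: "\<And>x. ereal a < ereal x \<Longrightarrow> ereal x < \<infinity> \<Longrightarrow> isCont \<phi> x" using C by simp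
  have h4: "AE x in lborel. ereal a < ereal x \<longrightarrow> ereal x < \<infinity> \<longrightarrow> 0 \<le> \<phi> x" using N by simp
  show "set_integrable lborel {a<..} \<phi>" using R(1)[OF h1 h2 h3 h4] by simp
  show "(LBINT y:{a<..}. \<phi> y) = B - F a" using R(2)[OF h1 h2 h3 h4]
    by (simp add: interval_integral_to_infinity_eq)
qed

lemma ftc_left:
  fixes \<phi> F :: "real \<Rightarrow> real"
  assumes D: "\<And>y. y \<le> b \<Longrightarrow> (F has_real_derivative \<phi> y) (at y)"
    and C: "\<And>y. y \<le> b \<Longrightarrow> isCont \<phi> y"
    and N: "\<And>y. y \<le> b \<Longrightarrow> 0 \<le> \<phi> y"
    and L: "(F \<longlongrightarrow> A) at_bot"
  shows "set_integrable lborel {..b} \<phi>" "(LBINT y:{..b}. \<phi> y) = F b - A"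
proof -
  have B: "((F \<circ> real_of_ereal) \<longlongrightarrow> F b) (at_left (ereal b))"
    unfolding ereal_tendsto_simps1
    using DERIV_isCont[OF D[of b]] by (simp add: isCont_def filterlim_at_split)
  have A: "((F \<circ> real_of_ereal) \<longlongrightarrow> A) (at_right (-\<infinity>))"
    unfolding ereal_tendsto_simps1 by (rule L)
  note R = interval_integral_FTC_nonneg[of "-\<infinity>" "ereal b" F \<phi>, OF _ _ _ _ A B]
  have h1: "-\<infinity> < ereal b" by simp
  have h2: "\<And>x. -\<infinity> < ereal x \<Longrightarrow> ereal x < ereal b \<Longrightarrow> DERIV F x :> \<phi> x" using D by simp
  have h3: "\<And>x. -\<infinity> < ereal x \<Longrightarrow> ereal x < ereal b \<Longrightarrow> isCont \<phi> x" using C by simp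
  have h4: "AE x in lborel. -\<infinity> < ereal x \<longrightarrow> ereal x < ereal b \<longrightarrow> 0 \<le> \<phi> x" using N by simp
  have i1: "set_integrable lborel {..<b} \<phi>" using R(1)[OF h1 h2 h3 h4] by simp
  have i2: "(LBINT y:{..<b}. \<phi> y) = F b - A" using R(2)[OF h1 h2 h3 h4]
    by (simp add: interval_lebesgue_integral_def)
  have dd: "({..b} - {..<b}) \<union> ({..<b} - {..b}) \<subseteq> {b}" by auto
  show "set_integrable lborel {..b} \<phi>"
    using i1 set_integrable_discrete_difference[of "{b}" "{..b}" "{..<b}" lborel \<phi>, OF _ dd] by simp
  show "(LBINT y:{..b}. \<phi> y) = F b - A"
    using i2 set_integral_discrete_difference[of "{b}" "{..b}" "{..<b}" lborel \<phi>, OF _ dd] by simp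
qed

lemma split_int:
  fixes \<phi> :: "real \<Rightarrow> real"
  assumes "integrable lborel \<phi>"
  shows "(LBINT y:{..x}. \<phi> y) + (LBINT y:{x<..}. \<phi> y) = integral\<^sup>L lborel \<phi>"
proof -
  have s: "set_integrable lborel A \<phi>" if "A \<in> sets lborel" for A
    using integrable_mult_indicator[of A lborel \<phi>] assms that unfolding set_integrable_def by simp
  have "(LBINT y:{..x}\<union>{x<..}. \<phi> y) = (LBINT y:{..x}. \<phi> y) + (LBINT y:{x<..}. \<phi> y)"
    by (rule set_integral_Un) (auto intro: s)
  moreover have "{..x}\<union>{x<..} = (UNIV::real set)" by auto
  ultimately show ?thesis by (simp add: set_lebesgue_integral_def)
qed

lemma set_int_nonneg:
  fixes \<phi> :: "real \<Rightarrow> real"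
  assumes "\<And>y. y \<in> A \<Longrightarrow> 0 \<le> \<phi> y"
  shows "0 \<le> (LBINT y:A. \<phi> y)"
  unfolding set_lebesgue_integral_def
  by (rule integral_nonneg_AE) (use assms in \<open>auto simp: indicator_def\<close>)

lemma deriv_lower:
  fixes \<phi> :: "real \<Rightarrow> real"
  assumes I: "integrable lborel \<phi>" and C: "\<And>y. isCont \<phi> y"
  shows "((\<lambda>u. LBINT y:{..u}. \<phi> y) has_real_derivative \<phi> x) (at x)"
proof -
  have s: "set_integrable lborel A \<phi>" if "A \<in> sets lborel" for A
    using integrable_mult_indicator[of A lborel \<phi>] I that unfolding set_integrable_def by simp
  define c where "c = x - 1"
  define d where "d = x + 1"
  have cont: "continuous_on {c..d} \<phi>" using C by (simp add: continuous_at_imp_continuous_on)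
  have "((\<lambda>u. LBINT y=c..u. \<phi> y) has_vector_derivative \<phi> x) (at x within {c..d})"
    by (rule interval_integral_FTC2[OF _ _ cont]) (auto simp: c_def d_def)
  then have "((\<lambda>u. LBINT y=c..u. \<phi> y) has_vector_derivative \<phi> x) (at x within {c<..<d})"
    by (rule has_vector_derivative_within_subset) auto
  then have "((\<lambda>u. LBINT y=c..u. \<phi> y) has_vector_derivative \<phi> x) (at x)"
    by (subst (asm) at_within_open) (auto simp: c_def d_def)
  then have "((\<lambda>u. (LBINT y:{..c}. \<phi> y) + (LBINT y=c..u. \<phi> y)) has_real_derivative \<phi> x) (at x)"
    by (auto intro!: derivative_eq_intros simp: has_real_derivative_iff_has_vector_derivative)
  then show ?thesis
  proof (rule has_field_derivative_transform_within_open[where S="{c<..<d}"])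
    fix u assume u: "u \<in> {c<..<d}"
    have "(LBINT y=c..u. \<phi> y) = (LBINT y:{c<..<u}. \<phi> y)"
      using u by (simp add: interval_integral_Ioo)
    also have "\<dots> = (LBINT y:{c<..u}. \<phi> y)"
      by (rule set_integral_discrete_difference[of "{u}"]) auto
    finally have e: "(LBINT y=c..u. \<phi> y) = (LBINT y:{c<..u}. \<phi> y)" .
    have "(LBINT y:{..c}\<union>{c<..u}. \<phi> y) = (LBINT y:{..c}. \<phi> y) + (LBINT y:{c<..u}. \<phi> y)"
      by (rule set_integral_Un) (auto intro: s)
    moreover have "{..c}\<union>{c<..u} = {..u}" using u by auto
    ultimately show "(LBINT y:{..c}. \<phi> y) + (LBINT y=c..u. \<phi> y) = (LBINT y:{..u}. \<phi> y)"
      using e by simp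
  qed (auto simp: c_def d_def)
qed



lemma V_deriv:
  assumes a: "\<alpha> > 1"
  shows "(V \<alpha> has_real_derivative (sgn y * \<bar>y\<bar> powr (\<alpha> - 1))) (at y)"
proof -
  consider "y > 0" | "y < 0" | "y = 0" by linarith
  then show ?thesis
  proof cases
    case 1
    have "((\<lambda>z. z powr \<alpha> / \<alpha>) has_real_derivative (\<alpha> * y powr (\<alpha> - 1) / \<alpha>)) (at y)"
      using 1 by (auto intro!: derivative_eq_intros)
    then have "((\<lambda>z. z powr \<alpha> / \<alpha>) has_real_derivative (sgn y * \<bar>y\<bar> powr (\<alpha> - 1))) (at y)"
      using 1 a by simp
    then show ?thesis
      by (rule has_field_derivative_transform_within_open[where S="{0<..}"])
         (use 1 in \<open>auto simp: V_def\<close>)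
  next
    case 2
    have "((\<lambda>z. (-z) powr \<alpha> / \<alpha>) has_real_derivative (\<alpha> * (-y) powr (\<alpha> - 1) * (-1) / \<alpha>)) (at y)"
      using 2 by (auto intro!: derivative_eq_intros)
    then have "((\<lambda>z. (-z) powr \<alpha> / \<alpha>) has_real_derivative (sgn y * \<bar>y\<bar> powr (\<alpha> - 1))) (at y)"
      using 2 a by simp
    then show ?thesis
      by (rule has_field_derivative_transform_within_open[where S="{..<0}"])
         (use 2 in \<open>auto simp: V_def\<close>)
  next
    case 3
    have lim: "((\<lambda>z. \<bar>z\<bar> powr (\<alpha> - 1) / \<alpha>) \<longlongrightarrow> 0) (at 0)"
    proof -
      have "((\<lambda>z. \<bar>z\<bar> powr (\<alpha> - 1)) \<longlongrightarrow> 0) (at (0::real))"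
        by (rule tendsto_zero_powrI) (use a in \<open>auto intro!: tendsto_eq_intros\<close>)
      then show ?thesis by (rule tendsto_divide_zero)
    qed
    have "((\<lambda>z. (V \<alpha> z - V \<alpha> 0) / (z - 0)) \<longlongrightarrow> 0) (at 0)"
    proof (rule Lim_null_comparison[OF _ lim])
      show "\<forall>\<^sub>F z in at 0. norm ((V \<alpha> z - V \<alpha> 0) / (z - 0)) \<le> \<bar>z\<bar> powr (\<alpha> - 1) / \<alpha>"
      proof (rule eventually_at_filter[THEN iffD2], rule always_eventually, intro allI impI)
        fix z :: real assume "z \<noteq> 0"
        then have "\<bar>z\<bar> powr \<alpha> = \<bar>z\<bar> powr (\<alpha> - 1) * \<bar>z\<bar>"
          using powr_add[of "\<bar>z\<bar>" "\<alpha> - 1" 1] by simp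
        then show "norm ((V \<alpha> z - V \<alpha> 0) / (z - 0)) \<le> \<bar>z\<bar> powr (\<alpha> - 1) / \<alpha>"
          using \<open>z \<noteq> 0\<close> a by (simp add: V_def abs_divide abs_mult)
      qed
    qed
    then show ?thesis using 3 by (simp add: has_field_derivative_iff)
  qed
qed

lemma deriv_V_abs:
  assumes "\<alpha> > 1"
  shows "deriv (V \<alpha>) \<bar>x\<bar> = \<bar>x\<bar> powr (\<alpha> - 1)"
  using DERIV_imp_deriv[OF V_deriv[OF assms, of "\<bar>x\<bar>"]]
  by (cases "x = 0") auto



lemma lim_aux: assumes "(a::real) > 0" "filterlim h at_top F"
  shows "((\<lambda>y. exp ((1 - h y)/a)) \<longlongrightarrow> 0) F"
proof -
  have "filterlim (\<lambda>y. h y * (1/a)) at_top F"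
    by (rule filterlim_at_top_mult_tendsto_pos[of "\<lambda>_. 1/a" "1/a", OF _ _ assms(2)]) (use assms in auto)
  then have "filterlim (\<lambda>y. -(h y * (1/a))) at_bot F"
    by (simp add: filterlim_uminus_at_bot)
  then have "filterlim (\<lambda>y. 1/a + -(h y * (1/a))) at_bot F"
    by (subst filterlim_tendsto_add_at_bot_iff[of "\<lambda>_. 1/a" "1/a"]) auto
  then have "filterlim (\<lambda>y. (1 - h y)/a) at_bot F"
    by (simp add: diff_divide_distrib)
  then show ?thesis by (rule filterlim_compose[OF exp_at_bot])
qed

lemma abs_at_bot: "filterlim (\<lambda>y::real. \<bar>y\<bar>) at_top at_bot"
  unfolding filterlim_at_bot_mirror by (simp add: filterlim_abs_real)

context
  fixes \<alpha> :: real
  assumes a1: "\<alpha> > 1"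
begin

definition "ff y = exp (- V \<alpha> y)"
definition "psi y = \<bar>y\<bar> powr (\<alpha> - 1) * ff y"

lemma ff_pos: "ff y > 0" by (simp add: ff_def)

lemma ff_deriv: "(ff has_real_derivative (- ff y * (sgn y * \<bar>y\<bar> powr (\<alpha> - 1)))) (at y)"
  unfolding ff_def using V_deriv[OF a1, of y]
  by (auto intro!: derivative_eq_intros)

lemma ff_cont: "isCont ff y"
  using DERIV_isCont[OF ff_deriv] .

lemma pw_cont: "isCont (\<lambda>y. \<bar>y\<bar> powr (\<alpha> - 1)) y"
proof -
  have "continuous_on UNIV (\<lambda>y::real. \<bar>y\<bar> powr (\<alpha> - 1))"
    by (rule continuous_on_powr') (use a1 in \<open>auto intro!: continuous_intros\<close>)
  then show ?thesis by (simp add: continuous_on_eq_continuous_at)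
qed

lemma psi_cont: "isCont psi y"
  unfolding psi_def by (intro continuous_intros pw_cont ff_cont)

lemma psi_nonneg: "psi y \<ge> 0"
  unfolding psi_def using ff_pos[of y] by simp

lemma V_lower: "V \<alpha> y \<ge> (\<bar>y\<bar> - 1) / \<alpha>"
proof (cases "\<bar>y\<bar> \<ge> 1")
  case True
  have "\<bar>y\<bar> powr 1 \<le> \<bar>y\<bar> powr \<alpha>"
    by (rule powr_mono) (use True a1 in auto)
  then show ?thesis using True a1 by (simp add: V_def divide_right_mono)
next
  case False
  then have "(\<bar>y\<bar> - 1) / \<alpha> \<le> 0" using a1 by (simp add: divide_nonpos_pos)
  moreover have "V \<alpha> y \<ge> 0" using a1 by (simp add: V_def)
  ultimately show ?thesis by linarith
qed

lemma ff_upper: "ff y \<le> exp ((1 - \<bar>y\<bar>) / \<alpha>)"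
  unfolding ff_def using V_lower[of y] by (simp add: diff_divide_distrib)

lemma ff_lim:
  assumes "filterlim (\<lambda>y. \<bar>y\<bar>) at_top F"
  shows "(ff \<longlongrightarrow> 0) F"
proof (rule Lim_null_comparison)
  show "\<forall>\<^sub>F x in F. norm (ff x) \<le> exp ((1 - \<bar>x\<bar>) / \<alpha>)"
    using ff_upper ff_pos by (simp add: less_imp_le)
  show "((\<lambda>y. exp ((1 - \<bar>y\<bar>) / \<alpha>)) \<longlongrightarrow> 0) F"
    by (rule lim_aux) (use a1 assms in auto)
qed

lemma ff_top: "(ff \<longlongrightarrow> 0) at_top" by (rule ff_lim) (rule filterlim_abs_real)
lemma ff_bot: "(ff \<longlongrightarrow> 0) at_bot" by (rule ff_lim) (rule abs_at_bot)

lemma psi_right: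
  assumes "a \<ge> 0"
  shows "set_integrable lborel {a<..} psi" "(LBINT y:{a<..}. psi y) = ff a"
proof -
  have D: "((\<lambda>y. - ff y) has_real_derivative psi y) (at y)" if "y \<ge> a" for y
  proof -
    have "((\<lambda>y. - ff y) has_real_derivative - (- ff y * (sgn y * \<bar>y\<bar> powr (\<alpha> - 1)))) (at y)"
      by (intro derivative_intros ff_deriv)
    moreover have "- (- ff y * (sgn y * \<bar>y\<bar> powr (\<alpha> - 1))) = psi y"
      using that assms by (cases "y = 0") (auto simp: psi_def)
    ultimately show ?thesis by simp
  qed
  have L: "((\<lambda>y. - ff y) \<longlongrightarrow> - 0) at_top" by (intro tendsto_intros ff_top)
  note R = ftc_right[OF D psi_cont psi_nonneg L]
  show "set_integrable lborel {a<..} psi" using R(1) .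
  show "(LBINT y:{a<..}. psi y) = ff a" using R(2) by simp
qed

lemma psi_left:
  assumes "b \<le> 0"
  shows "set_integrable lborel {..b} psi" "(LBINT y:{..b}. psi y) = ff b"
proof -
  have D: "(ff has_real_derivative psi y) (at y)" if "y \<le> b" for y
  proof -
    have "- ff y * (sgn y * \<bar>y\<bar> powr (\<alpha> - 1)) = psi y"
      using that assms by (cases "y = 0") (auto simp: psi_def)
    then show ?thesis using ff_deriv[of y] by simp
  qed
  note R = ftc_left[OF D psi_cont psi_nonneg ff_bot]
  show "set_integrable lborel {..b} psi" using R(1) .
  show "(LBINT y:{..b}. psi y) = ff b" using R(2) by simp
qed

lemma ff_meas: "ff \<in> borel_measurable lborel"
proof -
  have "continuous_on UNIV ff" using ff_cont by (simp add: continuous_on_eq_continuous_at)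
  then show ?thesis by (simp add: borel_measurable_continuous_onI)
qed

lemma ff_le_psi: "\<bar>y\<bar> \<ge> 1 \<Longrightarrow> ff y \<le> psi y"
proof -
  assume "\<bar>y\<bar> \<ge> 1"
  then have "1 \<le> \<bar>y\<bar> powr (\<alpha> - 1)" using a1 by (simp add: ge_one_powr_ge_zero)
  then show "ff y \<le> psi y" unfolding psi_def using ff_pos[of y]
    by (simp add: mult_le_cancel_right1)
qed

lemma ff_integrable: "integrable lborel ff"
proof -
  have sb: "set_borel_measurable lborel A ff" if "A \<in> sets lborel" for A
    unfolding set_borel_measurable_def using ff_meas that by measurable
  have i1: "set_integrable lborel {1<..} ff"
    by (rule set_integrable_bound[OF psi_right(1)[of 1] sb])
       (use ff_le_psi ff_pos psi_nonneg in \<open>auto simp: less_imp_le\<close>)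
  have i2: "set_integrable lborel {..-1} ff"
    by (rule set_integrable_bound[OF psi_left(1)[of "-1"] sb])
       (use ff_le_psi ff_pos psi_nonneg in \<open>auto simp: less_imp_le\<close>)
  have i3: "set_integrable lborel {-1..1} ff"
    unfolding set_integrable_def
    by (rule borel_integrable_compact) (auto intro: continuous_at_imp_continuous_on ff_cont)
  have "set_integrable lborel ({..-1} \<union> {-1..1} \<union> {1<..}) ff"
    by (intro set_integrable_Un i1 i2 i3) auto
  moreover have "{..-1} \<union> {-1..1} \<union> {1<..} = (UNIV :: real set)" by auto
  ultimately show ?thesis by (simp add: set_integrable_def)
qed

end


definition "gg y = exp (- \<bar>y\<bar>) / (2::real)"

lemma G_eq: "G x = (LBINT y:{..x}. gg y)"
  unfolding G_def gg_def by simp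

lemma gg_pos: "gg y > 0" by (simp add: gg_def)

lemma gg_cont: "isCont gg y"
  unfolding gg_def by (auto intro!: continuous_intros)

lemma gg_left:
  assumes "b \<le> 0"
  shows "set_integrable lborel {..b} gg" "(LBINT y:{..b}. gg y) = exp b / 2"
proof -
  have D: "((\<lambda>y. exp y / 2) has_real_derivative gg y) (at y)" if "y \<le> b" for y
  proof -
    have "gg y = exp y / 2" using that assms by (simp add: gg_def)
    then show ?thesis by (auto intro!: derivative_eq_intros)
  qed
  have L: "((\<lambda>y::real. exp y / 2) \<longlongrightarrow> 0) at_bot"
    by (rule tendsto_divide_zero) (rule exp_at_bot)
  note R = ftc_left[OF D gg_cont less_imp_le[OF gg_pos] L]
  show "set_integrable lborel {..b} gg" using R(1) .
  show "(LBINT y:{..b}. gg y) = exp b / 2" using R(2) by simp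
qed

lemma gg_right:
  assumes "a \<ge> 0"
  shows "set_integrable lborel {a<..} gg" "(LBINT y:{a<..}. gg y) = exp (-a) / 2"
proof -
  have D: "((\<lambda>y. - (exp (-y) / 2)) has_real_derivative gg y) (at y)" if "y \<ge> a" for y
  proof -
    have "gg y = exp (-y) / 2" using that assms by (simp add: gg_def)
    then show ?thesis by (auto intro!: derivative_eq_intros)
  qed
  have "((\<lambda>y::real. exp (-y)) \<longlongrightarrow> 0) at_top"
    by (rule filterlim_compose[OF exp_at_bot]) (simp add: filterlim_uminus_at_bot filterlim_ident)
  then have L: "((\<lambda>y::real. - (exp (-y) / 2)) \<longlongrightarrow> - 0) at_top"
    by (intro tendsto_minus tendsto_divide_zero)
  note R = ftc_right[OF D gg_cont less_imp_le[OF gg_pos] L]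
  show "set_integrable lborel {a<..} gg" using R(1) .
  show "(LBINT y:{a<..}. gg y) = exp (-a) / 2" using R(2) by simp
qed

lemma gg_integrable: "integrable lborel gg"
proof -
  have "set_integrable lborel ({..0} \<union> {0<..}) gg"
    by (intro set_integrable_Un gg_left(1) gg_right(1)) auto
  moreover have "{..0} \<union> {0<..} = (UNIV :: real set)" by auto
  ultimately show ?thesis by (simp add: set_integrable_def)
qed

lemma gg_total: "integral\<^sup>L lborel gg = 1"
  using split_int[OF gg_integrable, of 0] gg_left(2)[of 0] gg_right(2)[of 0] by simp

lemma G_neg: "s \<le> 0 \<Longrightarrow> G s = exp s / 2"
  using gg_left(2) G_eq by simp

lemma G_nonneg: "s \<ge> 0 \<Longrightarrow> G s = 1 - exp (-s) / 2"
  using split_int[OF gg_integrable, of s] gg_right(2)[of s] gg_total G_eq by simp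

lemma G_deriv: "(G has_real_derivative gg x) (at x)"
  using deriv_lower[OF gg_integrable gg_cont, of x] unfolding G_eq[abs_def] .

lemma G_strict: "a < b \<Longrightarrow> G a < G b"
  using DERIV_pos_imp_increasing[of a b G] G_deriv gg_pos by blast

lemma G_inj: "inj G"
  by (rule strict_mono_imp_inj_on) (simp add: strict_mono_def G_strict)

lemma gg_le_G: "gg s \<le> G s \<and> gg s \<le> 1 - G s"
proof (cases "s \<le> 0")
  case True
  have "exp s \<le> 1" using True by simp
  then show ?thesis using True G_neg[of s] by (simp add: gg_def)
next
  case False
  have "exp (-s) \<le> 1" using False by simp
  then show ?thesis using False G_nonneg[of s] by (simp add: gg_def)
qed

lemma G_surj:
  assumes "0 < y" "y < 1"
  shows "\<exists>s. G s = y"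
proof (cases "y \<le> 1/2")
  case True
  have "G (ln (2*y)) = y" using True assms by (subst G_neg) auto
  then show ?thesis by blast
next
  case False
  have "G (- ln (2*(1-y))) = y" using False assms by (subst G_nonneg) (auto simp: field_simps)
  then show ?thesis by blast
qed



context
  fixes \<alpha> :: real
  assumes a1: "\<alpha> > 1"
begin

abbreviation "f \<equiv> ff \<alpha>"
definition "II x = (LBINT y:{..x}. f y)"
definition "ZZ = integral\<^sup>L lborel f"

lemma Zc_eq: "Zc \<alpha> = ZZ"
  unfolding Zc_def ZZ_def ff_def[OF a1, abs_def] ..

lemma H_eq: "H \<alpha> x = II x / ZZ"
  unfolding H_def II_def Zc_eq ff_def[OF a1, abs_def] ..

lemma II_deriv: "(II has_real_derivative f x) (at x)"
  using deriv_lower[OF ff_integrable[OF a1] ff_cont[OF a1], of x] unfolding II_def[abs_def] .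

lemma II_strict: "a < b \<Longrightarrow> II a < II b"
  using DERIV_pos_imp_increasing[of a b II] II_deriv ff_pos[OF a1] by blast

lemma II_nonneg: "II x \<ge> 0"
  unfolding II_def by (rule set_int_nonneg) (use ff_pos[OF a1] in \<open>simp add: less_imp_le\<close>)

lemma split_II: "II x + (LBINT y:{x<..}. f y) = ZZ"
  unfolding II_def ZZ_def by (rule split_int[OF ff_integrable[OF a1]])

lemma T_nonneg: "(LBINT y:{x<..}. f y) \<ge> 0"
  by (rule set_int_nonneg) (use ff_pos[OF a1] in \<open>simp add: less_imp_le\<close>)

lemma II_pos: "II x > 0"
  using II_strict[of "x - 1" x] II_nonneg[of "x - 1"] by simp

lemma II_lt: "II x < ZZ"
  using II_strict[of x "x + 1"] split_II[of "x+1"] T_nonneg[of "x+1"] by simp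

lemma ZZ_pos: "ZZ > 0"
  using II_pos[of 0] II_lt[of 0] by simp

lemma ff_lower: "\<bar>x\<bar> \<le> 1 \<Longrightarrow> f x \<ge> exp (-1)"
proof -
  assume x: "\<bar>x\<bar> \<le> 1"
  have "\<bar>x\<bar> powr \<alpha> \<le> 1" using x a1 by (intro powr_le1) auto
  then have "V \<alpha> x \<le> 1" using a1 by (simp add: V_def)
  then show ?thesis by (simp add: ff_def[OF a1])
qed

definition "KK = 2 + 2 * ZZ * exp 1"

lemma small_bound:
  assumes x: "\<bar>x\<bar> \<le> 1" and q: "q \<le> ZZ"
  shows "q \<le> KK * f x / (\<bar>x\<bar> powr (\<alpha> - 1) + 1)"
proof -
  have p: "\<bar>x\<bar> powr (\<alpha> - 1) \<le> 1" using x a1 by (intro powr_le1) auto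
  have p0: "\<bar>x\<bar> powr (\<alpha> - 1) \<ge> 0" by simp
  have e: "exp 1 * f x \<ge> 1"
    using ff_lower[OF x] by (metis exp_minus_inverse mult_left_mono exp_ge_zero)
  have "q \<le> ZZ * (exp 1 * f x)" using q e ZZ_pos
    by (metis dual_order.trans mult_le_cancel_left1 order_less_imp_not_less)
  also have "\<dots> = (2 * ZZ * exp 1) * f x / 2" by simp
  also have "\<dots> \<le> (2 * ZZ * exp 1) * f x / (\<bar>x\<bar> powr (\<alpha> - 1) + 1)"
    using p p0 ZZ_pos ff_pos[OF a1, of x]
    by (intro divide_left_mono) (auto intro!: add_nonneg_pos)
  also have "\<dots> \<le> KK * f x / (\<bar>x\<bar> powr (\<alpha> - 1) + 1)"
    using p0 ff_pos[OF a1, of x] unfolding KK_def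
    by (intro divide_right_mono mult_right_mono) auto
  finally show ?thesis .
qed

lemma large_bound:
  assumes x: "\<bar>x\<bar> \<ge> 1" and q: "q \<le> f x / \<bar>x\<bar> powr (\<alpha> - 1)"
  shows "q \<le> KK * f x / (\<bar>x\<bar> powr (\<alpha> - 1) + 1)"
proof -
  define p where "p = \<bar>x\<bar> powr (\<alpha> - 1)"
  have p: "p \<ge> 1" using x a1 unfolding p_def by (simp add: ge_one_powr_ge_zero)
  have fp: "f x > 0" using ff_pos[OF a1] .
  have "f x / p \<le> 2 * f x / (p + 1)" using p fp by (simp add: field_simps)
  also have "\<dots> \<le> KK * f x / (p + 1)" using p fp ZZ_pos unfolding KK_def
    by (intro divide_right_mono mult_right_mono) auto
  finally show ?thesis using q unfolding p_def by simp
qed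

lemma T_bound:
  assumes "x \<ge> 0"
  shows "ZZ - II x \<le> KK * f x / (\<bar>x\<bar> powr (\<alpha> - 1) + 1)"
proof (cases "x \<le> 1")
  case True
  then show ?thesis using assms II_nonneg[of x] by (intro small_bound) auto
next
  case False
  define p where "p = x powr (\<alpha> - 1)"
  have p: "p \<ge> 1" using False a1 unfolding p_def by (simp add: ge_one_powr_ge_zero)
  have "ZZ - II x = (LBINT y:{x<..}. f y)" using split_II[of x] by simp
  also have "\<dots> \<le> (LBINT y:{x<..}. psi \<alpha> y / p)"
  proof (rule set_integral_mono)
    show "set_integrable lborel {x<..} f"
      using ff_integrable[OF a1] integrable_mult_indicator[of "{x<..}" lborel f]
      unfolding set_integrable_def by simp
    show "set_integrable lborel {x<..} (\<lambda>y. psi \<alpha> y / p)"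
      using psi_right(1)[OF a1 assms] by simp
    fix y assume y: "y \<in> {x<..}"
    have "p \<le> \<bar>y\<bar> powr (\<alpha> - 1)" unfolding p_def
      using y assms a1 by (intro powr_mono2) auto
    then have "p * f y \<le> psi \<alpha> y" unfolding psi_def[OF a1]
      using ff_pos[OF a1, of y] by (simp add: mult_right_mono)
    then show "f y \<le> psi \<alpha> y / p" using p by (simp add: field_simps)
  qed
  also have "\<dots> = f x / p" using psi_right(2)[OF a1 assms] by simp
  finally show ?thesis using False assms unfolding p_def by (intro large_bound) auto
qed

lemma I_bound:
  assumes "x \<le> 0"
  shows "II x \<le> KK * f x / (\<bar>x\<bar> powr (\<alpha> - 1) + 1)"
proof (cases "x \<ge> -1")
  case True
  then show ?thesis using assms II_lt[of x] by (intro small_bound) auto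
next
  case False
  define p where "p = \<bar>x\<bar> powr (\<alpha> - 1)"
  have p: "p \<ge> 1" using False a1 unfolding p_def by (simp add: ge_one_powr_ge_zero)
  have "II x \<le> (LBINT y:{..x}. psi \<alpha> y / p)"
    unfolding II_def
  proof (rule set_integral_mono)
    show "set_integrable lborel {..x} f"
      using ff_integrable[OF a1] integrable_mult_indicator[of "{..x}" lborel f]
      unfolding set_integrable_def by simp
    show "set_integrable lborel {..x} (\<lambda>y. psi \<alpha> y / p)"
      using psi_left(1)[OF a1 assms] by simp
    fix y assume y: "y \<in> {..x}"
    have "p \<le> \<bar>y\<bar> powr (\<alpha> - 1)" unfolding p_def
      using y assms a1 by (intro powr_mono2) auto
    then have "p * f y \<le> psi \<alpha> y" unfolding psi_def[OF a1]
      using ff_pos[OF a1, of y] by (simp add: mult_right_mono)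
    then show "f y \<le> psi \<alpha> y / p" using p by (simp add: field_simps)
  qed
  also have "\<dots> = f x / p" using psi_left(2)[OF a1 assms] by simp
  finally show ?thesis using False unfolding p_def by (intro large_bound) auto
qed

end


theorem lemma3p5:
  fixes \<alpha> :: real and t :: "real \<Rightarrow> real"
  assumes "\<alpha> > 1"
    and "\<And>x. G x = H \<alpha> (t x)"
  shows "\<exists>C>0. \<forall>x. t differentiable (at (inv t x)) \<and>
           \<bar>deriv t (inv t x)\<bar> \<le> C / (deriv (V \<alpha>) \<bar>x\<bar> + 1)"
proof -
  note a1 = assms(1)
  note tG = assms(2)
  let ?f = "ff \<alpha>"
  let ?Z = "ZZ \<alpha>"
  let ?H = "H \<alpha>"
  have Zp: "?Z > 0" using ZZ_pos[OF a1] .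
  have fp: "\<And>y. ?f y > 0" using ff_pos[OF a1] .
  have Hd: "(?H has_real_derivative ?f y / ?Z) (at y)" for y
  proof -
    have "((\<lambda>x. II \<alpha> x / ?Z) has_real_derivative ?f y / ?Z) (at y)"
      using II_deriv[OF a1, of y] Zp by (auto intro!: derivative_eq_intros)
    moreover have "?H = (\<lambda>x. II \<alpha> x / ?Z)" using H_eq[OF a1] by (simp add: fun_eq_iff)
    ultimately show ?thesis by simp
  qed
  have Hcont: "\<And>y. isCont ?H y" using Hd DERIV_isCont by blast
  have Hstrict: "?H a < ?H b" if "a < b" for a b
    using II_strict[OF a1 that] Zp by (simp add: H_eq[OF a1] divide_strict_right_mono)
  have Hinj: "inj ?H"
    by (rule strict_mono_imp_inj_on) (simp add: strict_mono_def Hstrict)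
  have tinj: "inj t"
  proof (rule injI)
    fix a b assume "t a = t b"
    then have "G a = G b" using tG by simp
    then show "a = b" using G_inj by (simp add: inj_eq)
  qed
  have tsurj: "\<exists>s. t s = x" for x
  proof -
    have "0 < ?H x" "?H x < 1"
      using II_pos[OF a1, of x] II_lt[OF a1, of x] Zp by (auto simp: H_eq[OF a1])
    then obtain s where "G s = ?H x" using G_surj by blast
    then have "?H (t s) = ?H x" using tG by simp
    then show ?thesis using Hinj by (auto simp: inj_eq)
  qed
  have teq: "t = (\<lambda>s. inv ?H (G s))"
    using tG Hinj by (auto simp: fun_eq_iff)
  have Hinv_d: "(inv ?H has_real_derivative inverse (?f y / ?Z)) (at (?H y))" for y
  proof (rule DERIV_inverse_function[where f="?H" and g="inv ?H" and x="?H y" and D="?f y / ?Z" and a="?H (y - 1)" and b="?H (y + 1)"])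
    show "(?H has_real_derivative ?f y / ?Z) (at (inv ?H (?H y)))"
      using Hd[of y] Hinj by simp
    show "?f y / ?Z \<noteq> 0" using fp[of y] Zp by simp
    show "?H (y - 1) < ?H y" "?H y < ?H (y + 1)" by (auto intro: Hstrict)
    show "?H (inv ?H z) = z" if zz: "?H (y - 1) < z" "z < ?H (y + 1)" for z
    proof -
      have "continuous_on {y - 1..y + 1} ?H" using Hcont by (simp add: continuous_at_imp_continuous_on)
      then obtain w where "?H w = z"
        using IVT'[of ?H "y - 1" z "y + 1"] zz by force
      then show ?thesis using Hinj by auto
    qed
    show "isCont (inv ?H) (?H y)"
      by (rule isCont_inverse_function[of 1]) (use Hinj Hcont in auto)
  qed
  have td: "(t has_real_derivative ?Z * gg s / ?f (t s)) (at s)" for s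
  proof -
    have "((\<lambda>s. inv ?H (G s)) has_real_derivative inverse (?f (t s) / ?Z) * gg s) (at s)"
      using DERIV_chain2[OF Hinv_d[of "t s", folded tG] G_deriv] .
    then show ?thesis using fp[of "t s"] Zp by (simp add: teq[symmetric] field_simps)
  qed
  define C where "C = KK \<alpha>"
  have Cp: "C > 0" unfolding C_def KK_def[OF a1] using Zp by (simp add: add_pos_nonneg)
  have "\<forall>x. t differentiable (at (inv t x)) \<and>
           \<bar>deriv t (inv t x)\<bar> \<le> C / (deriv (V \<alpha>) \<bar>x\<bar> + 1)"
  proof
    fix x
    obtain s where s: "t s = x" using tsurj by blast
    have isx: "inv t x = s" using s tinj by (metis inv_f_f)
    have dif: "t differentiable (at s)" using td[of s] by (auto simp: real_differentiable_def)
    have dv: "deriv t s = ?Z * gg s / ?f x" using DERIV_imp_deriv[OF td[of s]] s by simp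
    have Gs: "G s = II \<alpha> x / ?Z" using tG[of s] s H_eq[OF a1] by simp
    have g1: "?Z * gg s \<le> II \<alpha> x" using gg_le_G[of s] Gs Zp by (simp add: field_simps)
    have g2: "?Z * gg s \<le> ?Z - II \<alpha> x" using gg_le_G[of s] Gs Zp by (simp add: field_simps)
    have bd: "?Z * gg s \<le> C * ?f x / (\<bar>x\<bar> powr (\<alpha> - 1) + 1)"
    proof (cases "x \<ge> 0")
      case True
      then show ?thesis using g2 T_bound[OF a1 True] unfolding C_def by linarith
    next
      case False
      then show ?thesis using g1 I_bound[OF a1, of x] unfolding C_def by linarith
    qed
    have pos: "\<bar>x\<bar> powr (\<alpha> - 1) + 1 > 0" by (simp add: add_nonneg_pos)
    have "\<bar>deriv t s\<bar> = ?Z * gg s / ?f x" using dv Zp gg_pos[of s] fp[of x] by simp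
    also have "\<dots> \<le> C / (\<bar>x\<bar> powr (\<alpha> - 1) + 1)"
      using bd fp[of x] pos by (simp add: field_simps)
    finally show "t differentiable (at (inv t x)) \<and>
           \<bar>deriv t (inv t x)\<bar> \<le> C / (deriv (V \<alpha>) \<bar>x\<bar> + 1)"
      using dif isx deriv_V_abs[OF a1, of x] by simp
  qed
  then show ?thesis using Cp by blast
qed


end
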